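(* Let $M=\mathbb R^3\setminus B(0,1)$, where $B(0,1)$ is the open unit ball. Let $A$ be a constant such that $\|v\|_{L^6(\mathbb R^3)}\le A\|\nabla v\|_{L^2(\mathbb R^3)}$ for every $v\in C^1_c(\mathbb R^3)$. Then for every $u\in C^1_c(M)$, $$\|u\|_{L^6(M)}\le 2(2+\sqrt2)\,A\,\|\nabla u\|_{L^2(M)}.$$
   Context: Norms and gradients are Euclidean; $C^1_c(M)$ denotes $C^1$ functions with compact support in $M$ (the support may meet the sphere $\partial M$). *)

theory Defs
  imports "HOL-Analysis.Analysis"
begin

definition extM :: "(real^3) set" where
  "extM = - ball 0 1"

definition C1c_R3 :: "(real^3 \<Rightarrow> real) \<Rightarrow> (real^3 \<Rightarrow> real^3) \<Rightarrow> bool" where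
  "C1c_R3 v G \<longleftrightarrow>
     (\<forall>x. GDERIV v x :> G x) \<and> continuous_on UNIV G \<and>
     compact (closure {x. v x \<noteq> 0})"

text \<open>u is in C^1_c(M) with gradient field G: u is continuous on M, differentiable in the
  interior of M with gradient G, G extends continuously to all of M (including the sphere),
  and the support of u in M is compact (it may meet the sphere).\<close>
definition C1c_M :: "(real^3 \<Rightarrow> real) \<Rightarrow> (real^3 \<Rightarrow> real^3) \<Rightarrow> bool" where
  "C1c_M u G \<longleftrightarrow>
     continuous_on extM u \<and>
     (\<forall>x\<in>interior extM. GDERIV u x :> G x) \<and> continuous_on extM G \<and>
     compact (closure {x\<in>extM. u x \<noteq> 0})"

definition Lp_norm_on :: "real \<Rightarrow> (real^3) set \<Rightarrow> (real^3 \<Rightarrow> real) \<Rightarrow> real" where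
  "Lp_norm_on p S f = (LINT x:S|lborel. \<bar>f x\<bar> powr p) powr (1/p)"

end

theory Submission
  imports Defs
begin


definition s1 :: "real^3 \<Rightarrow> real^3" where "s1 x = (1/(x\<bullet>x)) *\<^sub>R x"
definition s2 :: "real^3 \<Rightarrow> real^3" where "s2 x = (1/(norm x ^ 3)) *\<^sub>R x"
definition D1 :: "real^3 \<Rightarrow> real^3 \<Rightarrow> real^3" where
  "D1 x h = (1/(x\<bullet>x)) *\<^sub>R h - (2*(x\<bullet>h)/(x\<bullet>x)^2) *\<^sub>R x"
definition D2 :: "real^3 \<Rightarrow> real^3 \<Rightarrow> real^3" where
  "D2 x h = (1/(norm x ^ 3)) *\<^sub>R h - (3*(x\<bullet>h)/(norm x ^ 5)) *\<^sub>R x"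

lemma s1_deriv: assumes "x \<noteq> 0" shows "(s1 has_derivative D1 x) (at x within S)"
proof -
  have xx: "x \<bullet> x \<noteq> 0" using assms by simp
  have "((\<lambda>y. (1/(y\<bullet>y)) *\<^sub>R y) has_derivative
     (\<lambda>h. (1/(x\<bullet>x)) *\<^sub>R h + (- (inverse (x\<bullet>x) * (h \<bullet> x + x \<bullet> h) * inverse (x\<bullet>x))) *\<^sub>R x)) (at x within S)"
    using xx by (auto intro!: derivative_eq_intros simp: divide_inverse)
  moreover have "(\<lambda>h. (1/(x\<bullet>x)) *\<^sub>R h + (- (inverse (x\<bullet>x) * (h \<bullet> x + x \<bullet> h) * inverse (x\<bullet>x))) *\<^sub>R x) = D1 x"
    using xx by (auto simp: D1_def fun_eq_iff inner_commute power2_eq_square field_simps)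
  ultimately show ?thesis unfolding s1_def by simp
qed

lemma s2_deriv: assumes "x \<noteq> 0" shows "(s2 has_derivative D2 x) (at x within S)"
proof -
  have n: "norm x \<noteq> 0" using assms by simp
  have "((\<lambda>y. (1/(norm y ^ 3)) *\<^sub>R y) has_derivative
     (\<lambda>h. (1/(norm x ^ 3)) *\<^sub>R h + (- (inverse (norm x ^ 3) * (of_nat 3 * norm x ^ 2 * (h \<bullet> sgn x)) * inverse (norm x ^ 3))) *\<^sub>R x)) (at x within S)"
    using n by (auto intro!: derivative_eq_intros has_derivative_norm[THEN has_derivative_at_withinI] simp: divide_inverse assms)
  moreover have "(\<lambda>h. (1/(norm x ^ 3)) *\<^sub>R h + (- (inverse (norm x ^ 3) * (of_nat 3 * norm x ^ 2 * (h \<bullet> sgn x)) * inverse (norm x ^ 3))) *\<^sub>R x) = D2 x"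
  proof
    fix h
    have "norm x ^ 5 = norm x ^ 3 * norm x * norm x" "norm x ^ 6 = norm x * (norm x ^ 3 * (norm x * norm x))" by (simp_all add: eval_nat_numeral)
    then show "(1/(norm x ^ 3)) *\<^sub>R h + (- (inverse (norm x ^ 3) * (of_nat 3 * norm x ^ 2 * (h \<bullet> sgn x)) * inverse (norm x ^ 3))) *\<^sub>R x = D2 x h"
      using n by (simp add: D2_def inner_commute sgn_div_norm power2_eq_square divide_simps)
  qed
  ultimately show ?thesis unfolding s2_def by simp
qed

lemma matrix_D1: "matrix (D1 x) $ i $ j = (if i = j then 1/(x\<bullet>x) else 0) - 2 * x$j * x$i / (x\<bullet>x)^2"
proof -
  have "matrix (D1 x) $ i $ j = D1 x (axis j 1) $ i" by (simp add: matrix_def)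
    have "x \<bullet> axis j 1 = x $ j" by (simp add: inner_axis)
    moreover have "axis j (1::real) $ i = (if i = j then 1 else 0)" by (simp add: axis_def)
    ultimately show ?thesis using \<open>matrix (D1 x) $ i $ j = D1 x (axis j 1) $ i\<close> by (simp add: D1_def)
qed

lemma det_D1: assumes "x \<noteq> 0" shows "det (matrix (D1 x)) = - 1/(x\<bullet>x)^3"
proof -
  define a b c where "a = x$1" "b = x$2" "c = x$3"
  define k where "k = 1/(x\<bullet>x)"
  have e: "x\<bullet>x = a^2 + b^2 + c^2" by (simp add: inner_vec_def sum_3 power2_eq_square a_b_c_def)
  have "x\<bullet>x \<noteq> 0" using assms by simp
  have k: "k * (a^2+b^2+c^2) = 1" using \<open>x\<bullet>x \<noteq> 0\<close> e k_def by simp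
  have m: "matrix (D1 x) $ i $ j = (if i = j then k else 0) - 2 * x$j * x$i * k^2" for i j
    unfolding matrix_D1 k_def by (simp add: power2_eq_square)
  have "det (matrix (D1 x)) = (k - 2*a*a*k^2)*(k - 2*b*b*k^2)*(k - 2*c*c*k^2) + (- 2*b*a*k^2)*(- 2*c*b*k^2)*(- 2*a*c*k^2)
     + (- 2*c*a*k^2)*(- 2*a*b*k^2)*(- 2*b*c*k^2) - (k - 2*a*a*k^2)*(- 2*c*b*k^2)*(- 2*b*c*k^2)
     - (- 2*b*a*k^2)*(- 2*a*b*k^2)*(k - 2*c*c*k^2) - (- 2*c*a*k^2)*(k - 2*b*b*k^2)*(- 2*a*c*k^2)"
    unfolding det_3 m a_b_c_def by simp
  also have "\<dots> = - (k ^ 3)" using k by algebra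
  finally show ?thesis by (simp add: k_def power_divide)
qed
lemma det_rank1:
  fixes M :: "real^3^3" and x :: "real^3"
  assumes m: "\<And>i j. M $ i $ j = (if i = j then p else 0) - q * x$j * x$i"
  shows "det M = p^2 * (p - q * (x\<bullet>x))"
proof -
  define a b c where "a = x$1" "b = x$2" "c = x$3"
  have e: "x\<bullet>x = a^2 + b^2 + c^2" by (simp add: inner_vec_def sum_3 power2_eq_square a_b_c_def)
  have "det M = (p - q*a*a)*(p - q*b*b)*(p - q*c*c) + (- q*b*a)*(- q*c*b)*(- q*a*c)
     + (- q*c*a)*(- q*a*b)*(- q*b*c) - (p - q*a*a)*(- q*c*b)*(- q*b*c)
     - (- q*b*a)*(- q*a*b)*(p - q*c*c) - (- q*c*a)*(p - q*b*b)*(- q*a*c)"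
    unfolding det_3 m a_b_c_def by simp
  also have "\<dots> = p^2 * (p - q * (a^2+b^2+c^2))" by algebra
  finally show ?thesis by (simp add: e)
qed

lemma axis_inner_eq: "(x::real^3) \<bullet> axis j 1 = x $ j" by (simp add: inner_axis)
lemma axis_comp: "axis j (1::real) $ i = (if i = j then 1 else 0)" by (simp add: axis_def)

lemma det_D2: assumes "x \<noteq> 0" shows "det (matrix (D2 x)) = - 2/norm x ^ 9"
proof -
  have m: "matrix (D2 x) $ i $ j = (if i = j then 1/norm x^3 else 0) - (3/norm x^5) * x$j * x$i" for i j
  proof -
    have "matrix (D2 x) $ i $ j = D2 x (axis j 1) $ i" by (simp add: matrix_def)
    then show ?thesis by (simp add: D2_def axis_inner_eq axis_comp)
  qed
  have n: "norm x \<noteq> 0" using assms by simp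
  have xx: "x \<bullet> x = norm x ^ 2" by (simp add: power2_norm_eq_inner)
  show ?thesis unfolding det_rank1[OF m] xx using n
    by (simp add: field_simps eval_nat_numeral)
qed

lemma D1_sym: "D1 x h \<bullet> w = h \<bullet> D1 x w"
  by (simp add: D1_def inner_diff_left inner_diff_right inner_commute algebra_simps)
lemma D2_sym: "D2 x h \<bullet> w = h \<bullet> D2 x w"
  by (simp add: D2_def inner_diff_left inner_diff_right inner_commute algebra_simps)

lemma norm_D1: assumes "x \<noteq> 0" shows "norm (D1 x w) = norm w / (x\<bullet>x)"
proof -
  have xx: "x \<bullet> x > 0" using assms by simp
  have "(norm (D1 x w))^2 = D1 x w \<bullet> D1 x w" by (simp add: power2_norm_eq_inner)
  also have "\<dots> = (w \<bullet> w) / (x\<bullet>x)^2"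
    using xx by (simp add: D1_def inner_diff_left inner_diff_right inner_commute field_simps power2_eq_square)
  also have "\<dots> = (norm w / (x\<bullet>x))^2" by (simp add: power2_norm_eq_inner power_divide)
  finally show ?thesis using xx by (simp add: power2_eq_iff_nonneg)
qed

lemma norm_D2: assumes "x \<noteq> 0" shows "norm (D2 x w) \<le> 2 * norm w / norm x ^ 3"
proof -
  have n: "norm x > 0" using assms by simp
  have xx: "x \<bullet> x = norm x ^ 2" by (simp add: power2_norm_eq_inner)
  have cs: "(x \<bullet> w)^2 \<le> (norm x)^2 * (norm w)^2"
    by (metis Cauchy_Schwarz_ineq power_mult_distrib power2_norm_eq_inner inner_commute)
  have "(norm (D2 x w))^2 = D2 x w \<bullet> D2 x w" by (simp add: power2_norm_eq_inner)
  also have "\<dots> = (1/norm x^3)^2 * (w\<bullet>w) - 2*(1/norm x^3)*(3*(x\<bullet>w)/(norm x^5))*(w\<bullet>x) + (3*(x\<bullet>w)/(norm x^5))^2*(x\<bullet>x)"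
    unfolding D2_def by (simp add: inner_diff_left inner_diff_right inner_commute algebra_simps power2_eq_square)
  also have "\<dots> = (norm w^2 + 3 * (x\<bullet>w)^2 / norm x^2) / norm x^6"
    using n unfolding xx power2_norm_eq_inner[symmetric] by (simp add: inner_commute field_simps eval_nat_numeral)
  also have "\<dots> \<le> (norm w^2 + 3 * norm w^2) / norm x^6"
    using cs n by (intro divide_right_mono add_left_mono) (auto simp: field_simps)
  also have "\<dots> = (2 * norm w / norm x ^ 3)^2" by (simp add: power_divide field_simps eval_nat_numeral)
  finally show ?thesis using n by (simp add: power2_le_iff_abs_le)
qed

lemma extM_iff: "x \<in> extM \<longleftrightarrow> 1 \<le> norm x"
  by (auto simp: extM_def dist_norm)
lemma interior_extM: "interior extM = {x. 1 < norm x}"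
proof -
  have "interior extM = - closure (ball (0::real^3) 1)" by (simp add: extM_def interior_complement)
  also have "\<dots> = {x. 1 < norm x}" by (auto simp: closure_ball dist_norm)
  finally show ?thesis .
qed
lemma closed_extM: "closed extM" by (simp add: extM_def closed_Compl)

lemma seg_bound:
  fixes u :: "real^3 \<Rightarrow> real"
  assumes cu: "continuous_on extM u" and du: "\<forall>x\<in>interior extM. GDERIV u x :> G x"
    and S1: "\<And>t. t \<in> {0..1} \<Longrightarrow> a + t *\<^sub>R (b - a) \<in> extM"
    and S2: "\<And>t. t \<in> {0<..<1} \<Longrightarrow> 1 < norm (a + t *\<^sub>R (b - a))"
    and S3: "\<And>t. t \<in> {0<..<1} \<Longrightarrow> norm (G (a + t *\<^sub>R (b - a)) - g) \<le> e"
  shows "\<bar>u b - u a - (b - a) \<bullet> g\<bar> \<le> e * norm (b - a)"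
proof -
  define f where "f t = u (a + t *\<^sub>R (b - a)) - (a + t *\<^sub>R (b - a)) \<bullet> g" for t
  have cf: "continuous_on {0..1} f"
    unfolding f_def
    by (intro continuous_intros continuous_on_compose2[OF cu]) (auto intro: S1)
  have df: "(f has_derivative (\<lambda>h. (h *\<^sub>R (b - a)) \<bullet> G (a + t *\<^sub>R (b - a)) - (h *\<^sub>R (b - a)) \<bullet> g)) (at t)"
    if "0 < t" "t < 1" for t
  proof -
    have "a + t *\<^sub>R (b - a) \<in> interior extM" using S2[of t] that by (simp add: interior_extM)
    then have gu: "(u has_derivative (\<lambda>h. h \<bullet> G (a + t *\<^sub>R (b - a)))) (at (a + t *\<^sub>R (b - a)))"
      using du by (simp add: gderiv_def)
    have l: "((\<lambda>t. a + t *\<^sub>R (b - a)) has_derivative (\<lambda>h. h *\<^sub>R (b - a))) (at t)"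
      by (auto intro!: derivative_eq_intros)
    show ?thesis unfolding f_def
      by (rule has_derivative_diff[OF has_derivative_compose[OF l gu]])
         (auto intro!: derivative_eq_intros)
  qed
  obtain t where t: "t \<in> {0<..<1}"
    and le: "norm (f 1 - f 0) \<le> norm ((1 - 0) *\<^sub>R (b - a) \<bullet> G (a + t *\<^sub>R (b - a)) - (1 - 0) *\<^sub>R (b - a) \<bullet> g)"
    using mvt_general[OF _ cf, of "\<lambda>t h. (h *\<^sub>R (b - a)) \<bullet> G (a + t *\<^sub>R (b - a)) - (h *\<^sub>R (b - a)) \<bullet> g"] df
    by auto
  have "norm ((1 - 0) *\<^sub>R (b - a) \<bullet> G (a + t *\<^sub>R (b - a)) - (1 - 0) *\<^sub>R (b - a) \<bullet> g)
      = \<bar>(b - a) \<bullet> (G (a + t *\<^sub>R (b - a)) - g)\<bar>" by (simp add: inner_diff_right)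
  also have "\<dots> \<le> norm (b - a) * norm (G (a + t *\<^sub>R (b - a)) - g)" by (rule Cauchy_Schwarz_ineq2)
  also have "\<dots> \<le> norm (b - a) * e" using S3[OF t] by (simp add: mult_left_mono)
  finally have "\<bar>f 1 - f 0\<bar> \<le> e * norm (b - a)" using le by (simp add: mult.commute)
  then show ?thesis by (simp add: f_def inner_diff_left algebra_simps)
qed

lemma r1: assumes "0 < (d::real)" "d < 1/2" shows "(1+d)^2*(1-d^2/4) > 1"
proof -
  have a: "(1+d)^2 \<le> (3/2)^2" using assms by (intro power_mono) auto
  have b: "d^2/4*(1+d)^2 \<le> d^2/4*(3/2)^2" using a by (intro mult_left_mono) auto
  have b': "d^2/4*(3/2)^2 = 9/16 * d^2" by (simp add: power2_eq_square)
  have c: "(1+d)^2*(1-d^2/4) = 1 + 2*d + d^2 - d^2/4*(1+d)^2" by (simp add: power2_eq_square algebra_simps)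
  show ?thesis using b b' c assms zero_le_power2[of d] by linarith
qed
lemma r3: assumes "0 < (d::real)" "d < 1/2" "0 \<le> t" "t \<le> 1" shows "(1+d)*t*d + d < 3 * d"
proof -
  have h1: "(1+d)*d*t \<le> (1+d)*d" using assms by (intro mult_left_le) auto
  have h2: "d*d < d * (1/2)" using assms by (intro mult_strict_left_mono) auto
  have e1: "(1+d)*t*d = (1+d)*d*t" by simp
  have e2: "(1+d)*d = d + d*d" by (simp add: algebra_simps)
  have "(1+d)*t*d \<le> d + d*d" using h1 e1 e2 by linarith
  then show ?thesis using h2 assms(1) by linarith
qed
lemma r2: "t*(1-t) \<le> (1/4::real)"
proof -
  have "t*(1-t) = 1/4 - (t-1/2)^2" by (simp add: power2_eq_square algebra_simps)
  then show ?thesis using zero_le_power2[of "t - 1/2"] by linarith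
qed

lemma norm_convex_sq:
  fixes p y :: "real^3"
  shows "norm (p + t *\<^sub>R (y - p))^2 = (1-t)*norm p^2 + t*norm y^2 - t*(1-t)*norm(y-p)^2"
  unfolding power2_norm_eq_inner
  by (simp add: inner_add_left inner_add_right inner_diff_left inner_diff_right inner_commute algebra_simps)

lemma key:
  fixes u :: "real^3 \<Rightarrow> real"
  assumes cu: "continuous_on extM u" and du: "\<forall>x\<in>interior extM. GDERIV u x :> G x"
    and cG: "continuous_on extM G" and p: "p \<in> extM"
  shows "(u has_derivative (\<lambda>h. h \<bullet> G p)) (at p within extM)"
proof (cases "1 < norm p")
  case True
  then have "p \<in> interior extM" by (simp add: interior_extM)
  then show ?thesis using du by (auto simp: gderiv_def intro: has_derivative_at_withinI)
next
  case False
  with p have np: "norm p = 1" by (simp add: extM_iff)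
  show ?thesis unfolding has_derivative_within_alt
  proof (intro conjI allI impI)
    show "bounded_linear (\<lambda>h. h \<bullet> G p)" by (rule bounded_linear_inner_left)
    fix e :: real assume e: "0 < e"
    obtain d0 where d0: "d0 > 0" and d0G: "\<And>z. z \<in> extM \<Longrightarrow> dist z p < d0 \<Longrightarrow> dist (G z) (G p) < e/5"
      using cG p e unfolding continuous_on_iff by (metis divide_pos_pos zero_less_numeral)
    define g where "g = G p"
    have Gz: "norm (G z - g) \<le> e/5" if "z \<in> extM" "norm (z - p) < d0" for z
      using d0G[OF that(1)] that(2) by (simp add: dist_norm g_def)
    show "\<exists>d>0. \<forall>y\<in>extM. norm (y - p) < d \<longrightarrow> norm (u y - u p - (y - p) \<bullet> G p) \<le> e * norm (y - p)"
    proof (intro exI[of _ "min (1/2) (d0/3)"] conjI ballI impI)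
      show "0 < min (1/2) (d0/3)" using d0 by simp
      fix y assume y: "y \<in> extM" and yd: "norm (y - p) < min (1/2) (d0/3)"
      define d where "d = norm (y - p)"
      have d12: "d < 1/2" and dd0: "3 * d < d0" using yd by (auto simp: d_def)
      have ny: "1 \<le> norm y" using y by (simp add: extM_iff)
      have ny2: "norm y \<le> 1 + d" using norm_triangle_ineq[of "y - p" p] np by (simp add: d_def)
      show "norm (u y - u p - (y - p) \<bullet> G p) \<le> e * norm (y - p)"
      proof (cases "d = 0")
        case True then have "y = p" by (simp add: d_def)
        then show ?thesis by simp
      next
        case False
        then have dpos: "d > 0" by (simp add: d_def)
        define l where "l = 1 + d"
        have B1: "\<bar>u (l *\<^sub>R y) - u y - (l *\<^sub>R y - y) \<bullet> g\<bar> \<le> e/5 * norm (l *\<^sub>R y - y)"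
        proof (rule seg_bound[OF cu du])
          have pt: "y + t *\<^sub>R (l *\<^sub>R y - y) = (1 + t*d) *\<^sub>R y" for t
            by (simp add: l_def algebra_simps)
          fix t :: real
          show "t \<in> {0..1} \<Longrightarrow> y + t *\<^sub>R (l *\<^sub>R y - y) \<in> extM"
            unfolding pt extM_iff using ny dpos
            by (simp add: mult_le_cancel_right1 abs_of_nonneg add_nonneg_pos order_trans[OF _ mult_right_mono[of 1 "1+t*d" "norm y"]])
          show "t \<in> {0<..<1} \<Longrightarrow> 1 < norm (y + t *\<^sub>R (l *\<^sub>R y - y))"
          proof -
            assume t: "t \<in> {0<..<1}"
            have "1 < 1 + t*d" using t dpos by simp
            also have "\<dots> \<le> (1 + t*d) * norm y" using mult_left_mono[OF ny, of "1+t*d"] t dpos by simp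
            finally show ?thesis unfolding pt using t dpos by (simp add: abs_of_pos)
          qed
          show "t \<in> {0<..<1} \<Longrightarrow> norm (G (y + t *\<^sub>R (l *\<^sub>R y - y)) - g) \<le> e / 5"
          proof -
            assume t: "t \<in> {0<..<1}"
            have m: "(1 + t*d) *\<^sub>R y - p = (t*d) *\<^sub>R y + (y - p)" by (simp add: algebra_simps)
            have "norm ((1 + t*d) *\<^sub>R y - p) \<le> t*d*norm y + d"
              unfolding m using norm_triangle_ineq[of "(t*d) *\<^sub>R y" "y-p"] t dpos by (simp add: d_def)
            also have "\<dots> \<le> d * (1 + d) + d"
            proof -
              have tn: "t * norm y \<le> 1 + d" using mult_left_le_one_le[of "norm y" t] t ny2 by auto
              show ?thesis using mult_left_mono[OF tn, of d] dpos by (simp add: algebra_simps)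
            qed
            also have "\<dots> < d0"
            proof -
              have "(1+d)*1*d + d < 3*d" by (rule r3) (use dpos d12 in auto)
              then show ?thesis using dd0 by (simp add: algebra_simps)
            qed
            finally have "norm ((1 + t*d) *\<^sub>R y - p) < d0" .
            moreover have "(1 + t*d) *\<^sub>R y \<in> extM" unfolding extM_iff using ny t dpos
              by (simp add: order_trans[OF _ mult_right_mono[of 1 "1+t*d" "norm y"]])
            ultimately show ?thesis unfolding pt using Gz by blast
          qed
        qed
        have n1: "norm (l *\<^sub>R y - y) = d * norm y"
        proof -
          have "l *\<^sub>R y - y = d *\<^sub>R y" by (simp add: l_def algebra_simps)
          then show ?thesis using dpos by simp
        qed
        have B3: "\<bar>u (l *\<^sub>R p) - u p - (l *\<^sub>R p - p) \<bullet> g\<bar> \<le> e/5 * norm (l *\<^sub>R p - p)"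
        proof (rule seg_bound[OF cu du])
          have pt: "p + t *\<^sub>R (l *\<^sub>R p - p) = (1 + t*d) *\<^sub>R p" for t
            by (simp add: l_def algebra_simps)
          fix t :: real
          show "t \<in> {0..1} \<Longrightarrow> p + t *\<^sub>R (l *\<^sub>R p - p) \<in> extM"
            unfolding pt extM_iff using np dpos by simp
          show "t \<in> {0<..<1} \<Longrightarrow> 1 < norm (p + t *\<^sub>R (l *\<^sub>R p - p))"
            unfolding pt using np dpos by simp
          show "t \<in> {0<..<1} \<Longrightarrow> norm (G (p + t *\<^sub>R (l *\<^sub>R p - p)) - g) \<le> e / 5"
          proof -
            assume t: "t \<in> {0<..<1}"
            have "(1 + t*d) *\<^sub>R p - p = (t*d) *\<^sub>R p" by (simp add: algebra_simps)
            then have "norm ((1 + t*d) *\<^sub>R p - p) = t * d" using t dpos np by simp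
            also have "\<dots> < d0"
            proof -
              have "t * d \<le> d" using mult_left_le_one_le[of d t] t dpos by auto
              then show ?thesis using dpos dd0 by linarith
            qed
            finally have "norm ((1 + t*d) *\<^sub>R p - p) < d0" .
            moreover have "(1 + t*d) *\<^sub>R p \<in> extM" unfolding extM_iff using np t dpos by simp
            ultimately show ?thesis unfolding pt using Gz by blast
          qed
        qed
        have n3: "norm (l *\<^sub>R p - p) = d"
        proof -
          have "l *\<^sub>R p - p = d *\<^sub>R p" by (simp add: l_def algebra_simps)
          then show ?thesis using dpos np by simp
        qed
        have B2: "\<bar>u (l *\<^sub>R y) - u (l *\<^sub>R p) - (l *\<^sub>R y - l *\<^sub>R p) \<bullet> g\<bar> \<le> e/5 * norm (l *\<^sub>R y - l *\<^sub>R p)"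
        proof (rule seg_bound[OF cu du])
          have pt: "l *\<^sub>R p + t *\<^sub>R (l *\<^sub>R y - l *\<^sub>R p) = l *\<^sub>R (p + t *\<^sub>R (y - p))" for t
            by (simp add: algebra_simps)
          have big: "1 < norm (l *\<^sub>R p + t *\<^sub>R (l *\<^sub>R y - l *\<^sub>R p))" if t: "t \<in> {0..1}" for t
          proof -
            have "norm (p + t *\<^sub>R (y - p))^2 = (1-t)*norm p^2 + t*norm y^2 - t*(1-t)*d^2"
              by (simp add: norm_convex_sq d_def)
            moreover have "t * norm y^2 \<ge> t" using ny t by (simp add: one_le_power mult_le_cancel_left1)
            moreover have "t*(1-t)*d^2 \<le> 1/4*d^2" by (rule mult_right_mono) (use r2[of t] in auto)
            moreover have "t*(1-t) \<ge> 0" using t by simp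
            ultimately have w: "norm (p + t *\<^sub>R (y - p))^2 \<ge> 1 - d^2/4"
              using np by simp
            have "(l * norm (p + t *\<^sub>R (y - p)))^2 = l^2 * norm (p + t *\<^sub>R (y - p))^2"
              by (simp add: power_mult_distrib)
            also have "\<dots> \<ge> l^2 * (1 - d^2/4)" using w by (simp add: mult_left_mono)
            finally have "(l * norm (p + t *\<^sub>R (y - p)))^2 \<ge> l^2 * (1 - d^2/4)" .
            moreover have "l^2 * (1 - d^2/4) > 1" using r1[OF dpos d12] unfolding l_def .
            ultimately have "(l * norm (p + t *\<^sub>R (y - p)))^2 > 1" by linarith
            then have "l * norm (p + t *\<^sub>R (y - p)) > 1"
              by (metis abs_of_nonneg l_def dpos less_eq_real_def add_pos_pos zero_less_one mult_nonneg_nonneg norm_ge_zero one_less_power pos2 power_less_imp_less_base abs_le_square_iff one_power2 power2_abs not_le)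
            then show ?thesis unfolding pt using dpos l_def by simp
          qed
          fix t :: real
          show "t \<in> {0..1} \<Longrightarrow> l *\<^sub>R p + t *\<^sub>R (l *\<^sub>R y - l *\<^sub>R p) \<in> extM"
            using big by (simp add: extM_iff less_imp_le)
          show "t \<in> {0<..<1} \<Longrightarrow> 1 < norm (l *\<^sub>R p + t *\<^sub>R (l *\<^sub>R y - l *\<^sub>R p))"
            using big by simp
          show "t \<in> {0<..<1} \<Longrightarrow> norm (G (l *\<^sub>R p + t *\<^sub>R (l *\<^sub>R y - l *\<^sub>R p)) - g) \<le> e / 5"
          proof -
            assume t: "t \<in> {0<..<1}"
            have m: "l *\<^sub>R p + t *\<^sub>R (l *\<^sub>R y - l *\<^sub>R p) - p = (l*t) *\<^sub>R (y - p) + d *\<^sub>R p"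
              by (simp add: l_def algebra_simps)
            have "norm (l *\<^sub>R p + t *\<^sub>R (l *\<^sub>R y - l *\<^sub>R p) - p) \<le> l*t*d + d"
              unfolding m using norm_triangle_ineq[of "(l*t) *\<^sub>R (y - p)" "d *\<^sub>R p"] t dpos np
              by (simp add: d_def l_def)
            also have "\<dots> < d0" using r3[OF dpos d12, of t] t dd0 unfolding l_def by auto
            finally have "norm (l *\<^sub>R p + t *\<^sub>R (l *\<^sub>R y - l *\<^sub>R p) - p) < d0" .
            moreover have "l *\<^sub>R p + t *\<^sub>R (l *\<^sub>R y - l *\<^sub>R p) \<in> extM"
              using big[of t] t by (simp add: extM_iff less_imp_le)
            ultimately show ?thesis using Gz by blast
          qed
        qed
        have n2: "norm (l *\<^sub>R y - l *\<^sub>R p) = l * d"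
        proof -
          have "l *\<^sub>R y - l *\<^sub>R p = l *\<^sub>R (y - p)" by (simp add: algebra_simps)
          then show ?thesis using dpos by (simp add: l_def d_def)
        qed
        have id: "u y - u p - (y - p) \<bullet> g = - (u (l *\<^sub>R y) - u y - (l *\<^sub>R y - y) \<bullet> g)
            + (u (l *\<^sub>R y) - u (l *\<^sub>R p) - (l *\<^sub>R y - l *\<^sub>R p) \<bullet> g) + (u (l *\<^sub>R p) - u p - (l *\<^sub>R p - p) \<bullet> g)"
          by (simp add: inner_diff_left algebra_simps)
        have "\<bar>u y - u p - (y - p) \<bullet> g\<bar> \<le> e/5 * (d * norm y) + e/5 * (l * d) + e/5 * d"
          unfolding id using B1 B2 B3 unfolding n1 n2 n3 by (smt (verit))
        also have "\<dots> \<le> e/5 * (d * (3/2)) + e/5 * ((3/2) * d) + e/5 * d"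
          using e dpos ny2 d12 unfolding l_def by (intro add_mono mult_left_mono) auto
        also have "\<dots> \<le> e * d" using e dpos by simp
        finally show ?thesis by (simp add: g_def d_def)
      qed
    qed
  qed
qed



lemma norm_s1: "norm (s1 x) = 1 / norm x"
  by (simp add: s1_def power2_norm_eq_inner[symmetric] power2_eq_square)
lemma norm_s2: "norm (s2 x) = 1 / norm x ^ 2"
  by (cases "x = 0") (simp_all add: s2_def eval_nat_numeral)
lemma s1_sphere: "norm x = 1 \<Longrightarrow> s1 x = x"
  by (simp add: s1_def power2_norm_eq_inner[symmetric])
lemma s2_sphere: "norm x = 1 \<Longrightarrow> s2 x = x"
  by (simp add: s2_def)
lemma D_sphere: "norm x = 1 \<Longrightarrow> 3 *\<^sub>R D1 x w - 2 *\<^sub>R D2 x w = w"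
proof -
  assume "norm x = 1"
  moreover have e: "(3::real) *\<^sub>R w = w + 2 *\<^sub>R w" using scaleR_add_left[of 1 2 w] by simp
  ultimately show ?thesis by (simp add: D1_def D2_def power2_norm_eq_inner[symmetric] algebra_simps)
qed

lemma s1_in: "0 < norm x \<Longrightarrow> norm x \<le> 1 \<Longrightarrow> s1 x \<in> extM"
  by (simp add: extM_iff norm_s1)
lemma s2_in: "0 < norm x \<Longrightarrow> norm x \<le> 1 \<Longrightarrow> s2 x \<in> extM"
  by (simp add: extM_iff norm_s2 power_le_one)

lemma supp_R:
  assumes u: "C1c_M u G"
  obtains R where "R \<ge> 1" "\<And>x. x\<in>extM \<Longrightarrow> R < norm x \<Longrightarrow> u x = 0"
    "\<And>x. x\<in>extM \<Longrightarrow> R < norm x \<Longrightarrow> G x = 0"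
proof -
  from u have "compact (closure {x\<in>extM. u x \<noteq> 0})" by (simp add: C1c_M_def)
  then have "bounded {x\<in>extM. u x \<noteq> 0}" by (simp add: compact_closure)
  then obtain R0 where R0: "\<And>x. x\<in>extM \<Longrightarrow> u x \<noteq> 0 \<Longrightarrow> norm x \<le> R0"
    unfolding bounded_iff by blast
  define R where "R = max R0 1"
  have u0: "u x = 0" if "x\<in>extM" "R < norm x" for x
    using R0[OF that(1)] that(2) by (force simp: R_def)
  have G0: "G x = 0" if "x\<in>extM" "R < norm x" for x
  proof -
    have xi: "x \<in> interior extM" using that by (simp add: interior_extM R_def)
    with u have d1: "(u has_derivative (\<lambda>h. h \<bullet> G x)) (at x)" by (simp add: C1c_M_def gderiv_def)
    have "((\<lambda>z. 0::real) has_derivative (\<lambda>h. 0)) (at x)" by simp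
    then have d2: "(u has_derivative (\<lambda>h. 0)) (at x)"
    proof (rule has_derivative_transform_within_open[where s="{z. R < norm z}"])
      show "open {z::real^3. R < norm z}" by (simp add: open_Collect_less continuous_on_norm_id)
      show "x \<in> {z. R < norm z}" using that by simp
      fix z :: "real^3" assume "z \<in> {z. R < norm z}"
      then show "0 = u z" using u0[of z] by (simp add: extM_iff R_def)
    qed
    have "(\<lambda>h. h \<bullet> G x) = (\<lambda>h. 0)" using has_derivative_unique[OF d1 d2] .
    then have "G x \<bullet> G x = 0" by metis
    then show ?thesis by simp
  qed
  show ?thesis using that[of R] u0 G0 by (simp add: R_def)
qed

definition wfun :: "(real^3 \<Rightarrow> real) \<Rightarrow> real^3 \<Rightarrow> real" where
  "wfun u x = 3 * u (s1 x) - 2 * u (s2 x)"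
definition Wfun :: "(real^3 \<Rightarrow> real^3) \<Rightarrow> real^3 \<Rightarrow> real^3" where
  "Wfun G x = 3 *\<^sub>R D1 x (G (s1 x)) - 2 *\<^sub>R D2 x (G (s2 x))"
definition vext :: "(real^3 \<Rightarrow> real) \<Rightarrow> real^3 \<Rightarrow> real" where
  "vext u x = (if x \<in> extM then u x else if x = 0 then 0 else wfun u x)"
definition Gext :: "(real^3 \<Rightarrow> real^3) \<Rightarrow> real^3 \<Rightarrow> real^3" where
  "Gext G x = (if x \<in> extM then G x else if x = 0 then 0 else Wfun G x)"

lemma W_deriv:
  assumes u: "C1c_M u G" and x: "x \<in> Q" and Q: "Q \<subseteq> {z. 0 < norm z \<and> norm z \<le> 1}"
  shows "(wfun u has_derivative (\<lambda>h. h \<bullet> Wfun G x)) (at x within Q)"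
proof -
  have k: "\<And>z. z \<in> extM \<Longrightarrow> (u has_derivative (\<lambda>h. h \<bullet> G z)) (at z within extM)"
    using u by (intro key) (auto simp: C1c_M_def)
  have x0: "x \<noteq> 0" using x Q by auto
  have i1: "s1 ` Q \<subseteq> extM" using Q s1_in by blast
  have i2: "s2 ` Q \<subseteq> extM" using Q s2_in by blast
  have d1: "((\<lambda>z. u (s1 z)) has_derivative (\<lambda>h. D1 x h \<bullet> G (s1 x))) (at x within Q)"
    by (rule has_derivative_in_compose2[OF k i1 x s1_deriv[OF x0]])
  have d2: "((\<lambda>z. u (s2 z)) has_derivative (\<lambda>h. D2 x h \<bullet> G (s2 x))) (at x within Q)"
    by (rule has_derivative_in_compose2[OF k i2 x s2_deriv[OF x0]])
  have "(wfun u has_derivative (\<lambda>h. 3 * (D1 x h \<bullet> G (s1 x)) - 2 * (D2 x h \<bullet> G (s2 x)))) (at x within Q)"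
    unfolding wfun_def by (intro has_derivative_diff has_derivative_mult_right d1 d2)
  moreover have "(\<lambda>h. 3 * (D1 x h \<bullet> G (s1 x)) - 2 * (D2 x h \<bullet> G (s2 x))) = (\<lambda>h. h \<bullet> Wfun G x)"
    by (simp add: Wfun_def D1_sym D2_sym inner_diff_right)
  ultimately show ?thesis by simp
qed

lemma closure_T: "closure {z::real^3. 0 < norm z \<and> norm z \<le> 1} \<subseteq> cball 0 1"
  by (rule closure_minimal) auto

lemma vext_deriv_nz:
  assumes u: "C1c_M u G" and x0: "x \<noteq> 0"
  shows "(vext u has_derivative (\<lambda>h. h \<bullet> Gext G x)) (at x)"
proof -
  define S where "S = extM"
  define T where "T = {z::real^3. 0 < norm z \<and> norm z \<le> 1}"
  have cS: "closure S = S" using closed_extM by (simp add: S_def)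
  have cST: "closure S \<inter> closure T \<subseteq> {z. norm z = 1}"
    using closure_T cS by (force simp: S_def T_def extM_iff)
  have ST: "S \<union> T = - {0}" by (auto simp: S_def T_def extM_iff)
  have "((\<lambda>x. if x \<in> S then u x else wfun u x) has_derivative
      (if x \<in> S then (\<lambda>h. h \<bullet> G x) else (\<lambda>h. h \<bullet> Wfun G x))) (at x within (S \<union> T))"
  proof (rule has_derivative_If_within_closures)
    show "(u has_derivative (\<lambda>h. h \<bullet> G x)) (at x within S \<union> (closure S \<inter> closure T))"
      if "x \<in> S \<union> (closure S \<inter> closure T)"
    proof -
      have e: "S \<union> (closure S \<inter> closure T) = extM" using cS by (auto simp: S_def)
      show ?thesis unfolding e using that e u by (intro key) (auto simp: C1c_M_def)
    qed
    show "(wfun u has_derivative (\<lambda>h. h \<bullet> Wfun G x)) (at x within T \<union> (closure S \<inter> closure T))"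
      if "x \<in> T \<union> (closure S \<inter> closure T)"
      using that cST by (intro W_deriv[OF u]) (auto simp: T_def)
    show "u x = wfun u x" if "x \<in> closure S" "x \<in> closure T"
      using cST that by (auto simp: wfun_def s1_sphere s2_sphere)
    show "(\<lambda>h. h \<bullet> G x) = (\<lambda>h. h \<bullet> Wfun G x)" if "x \<in> closure S" "x \<in> closure T"
      using cST that by (auto simp: Wfun_def D_sphere s1_sphere s2_sphere)
    show "x \<in> S \<union> T" using ST x0 by auto
  qed
  moreover have "at x within (S \<union> T) = at x" unfolding ST
    by (rule at_within_open) (use x0 in auto)
  ultimately have d: "((\<lambda>x. if x \<in> S then u x else wfun u x) has_derivative
      (if x \<in> S then (\<lambda>h. h \<bullet> G x) else (\<lambda>h. h \<bullet> Wfun G x))) (at x)" by simp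
  have "(vext u has_derivative (if x \<in> S then (\<lambda>h. h \<bullet> G x) else (\<lambda>h. h \<bullet> Wfun G x))) (at x)"
    by (rule has_derivative_transform_within_open[OF d, of "-{0}"]) (use x0 in \<open>auto simp: vext_def S_def\<close>)
  moreover have "(if x \<in> S then (\<lambda>h. h \<bullet> G x) else (\<lambda>h. h \<bullet> Wfun G x)) = (\<lambda>h. h \<bullet> Gext G x)"
    using x0 by (auto simp: Gext_def S_def)
  ultimately show ?thesis by simp
qed

lemma small_zero:
  assumes R: "R \<ge> 1" "\<And>x. x\<in>extM \<Longrightarrow> R < norm x \<Longrightarrow> u x = 0"
    "\<And>x. x\<in>extM \<Longrightarrow> R < norm x \<Longrightarrow> G x = 0"
    and x: "norm x < 1/R"
  shows "vext u x = 0" "Gext G x = 0"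
proof -
  have x1: "norm x < 1" using x R(1) by (smt (verit) divide_le_eq_1)
  then have xe: "x \<notin> extM" by (simp add: extM_iff)
  have "u (s1 x) = 0 \<and> G (s1 x) = 0 \<and> u (s2 x) = 0 \<and> G (s2 x) = 0" if x0: "x \<noteq> 0"
  proof -
    have np: "0 < norm x" using x0 by simp
    have r1: "R < 1 / norm x" using x np R(1) by (simp add: field_simps)
    have "1 / norm x \<le> 1 / norm x ^ 2"
      using np x1 by (simp add: divide_left_mono power2_eq_square mult_left_le_one_le)
    then have r2: "R < 1 / norm x ^ 2" using r1 by linarith
    have e1: "s1 x \<in> extM" "s2 x \<in> extM" using np x1 s1_in s2_in by auto
    show ?thesis using R(2,3)[OF e1(1)] R(2,3)[OF e1(2)] r1 r2 by (simp add: norm_s1 norm_s2)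
  qed
  then show "vext u x = 0" "Gext G x = 0"
    using xe by (auto simp: vext_def Gext_def wfun_def Wfun_def D1_def D2_def)
qed

lemma s1_cont: "continuous_on A s1" if "0 \<notin> A"
  unfolding s1_def using that by (intro continuous_intros) auto
lemma s2_cont: "continuous_on A s2" if "0 \<notin> A"
  unfolding s2_def using that by (intro continuous_intros) auto

lemma ext_C1:
  assumes u: "C1c_M u G" and R: "R \<ge> 1" "\<And>x. x\<in>extM \<Longrightarrow> R < norm x \<Longrightarrow> u x = 0"
    "\<And>x. x\<in>extM \<Longrightarrow> R < norm x \<Longrightarrow> G x = 0"
  shows "C1c_R3 (vext u) (Gext G)"
  unfolding C1c_R3_def
proof (intro conjI allI)
  have cG: "continuous_on extM G" using u by (simp add: C1c_M_def)
  fix x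
  show "GDERIV (vext u) x :> Gext G x"
  proof (cases "x = 0")
    case False then show ?thesis using vext_deriv_nz[OF u] by (simp add: gderiv_def)
  next
    case True
    have Rp: "0 < 1/R" using R by simp
    have "((\<lambda>z. 0::real) has_derivative (\<lambda>h. 0)) (at x)" by simp
    then have "(vext u has_derivative (\<lambda>h. 0)) (at x)"
    proof (rule has_derivative_transform_within_open[where s="ball 0 (1/R)"])
      show "x \<in> ball 0 (1/R)" using True Rp by simp
      fix z :: "real^3" assume "z \<in> ball 0 (1/R)"
      then show "0 = vext u z" using small_zero[OF R, where x=z] by simp
    qed simp
    moreover have "Gext G x = 0" using True by (simp add: Gext_def extM_iff)
    ultimately show ?thesis by (simp add: gderiv_def)
  qed
next
  have cG: "continuous_on extM G" using u by (simp add: C1c_M_def)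
  define r where "r = 1/(2*R)"
  have r: "0 < r" "r < 1/R" "r < 1" using R(1) by (auto simp: r_def field_simps)
  define A where "A = {z::real^3. r \<le> norm z \<and> norm z \<le> 1}"
  have UN: "UNIV = extM \<union> (A \<union> cball 0 r)" by (auto simp: A_def extM_iff)
  have c1: "continuous_on extM (Gext G)"
    using cG by (rule continuous_on_eq) (simp add: Gext_def)
  have c2: "continuous_on A (Gext G)"
  proof (rule continuous_on_eq)
    have A0: "0 \<notin> A" using r by (auto simp: A_def)
    have i1: "s1 ` A \<subseteq> extM" using r by (auto simp: A_def intro!: s1_in)
    have i2: "s2 ` A \<subseteq> extM" using r by (auto simp: A_def intro!: s2_in)
    have g1: "continuous_on A (\<lambda>x. G (s1 x))" by (rule continuous_on_compose2[OF cG s1_cont[OF A0] i1])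
    have g2: "continuous_on A (\<lambda>x. G (s2 x))" by (rule continuous_on_compose2[OF cG s2_cont[OF A0] i2])
    show "continuous_on A (Wfun G)" unfolding Wfun_def D1_def D2_def
      using A0 by (intro continuous_intros g1 g2) auto
    fix x assume "x \<in> A"
    then show "Wfun G x = Gext G x" using r
      by (cases "norm x = 1") (auto simp: Gext_def Wfun_def extM_iff A_def D_sphere s1_sphere s2_sphere)
  qed
  have c3: "continuous_on (cball 0 r) (Gext G)"
    by (rule continuous_on_eq[of _ "\<lambda>x. 0"]) (use small_zero[OF R] r in auto)
  have clA: "closed A" unfolding A_def by (intro closed_Collect_conj closed_Collect_le continuous_intros)
  show "continuous_on UNIV (Gext G)" unfolding UN
    by (intro continuous_on_closed_Un closed_extM clA closed_Un closed_cball c1 c2 c3)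
next
  have "{x. vext u x \<noteq> 0} \<subseteq> cball 0 R"
  proof
    fix x assume "x \<in> {x. vext u x \<noteq> 0}"
    then show "x \<in> cball 0 R"
    proof (cases "R < norm x")
      case True
      then have "x \<in> extM" using R(1) by (simp add: extM_iff)
      then have "vext u x = 0" using R(2)[OF _ True] by (simp add: vext_def)
      then show ?thesis using \<open>x \<in> {x. vext u x \<noteq> 0}\<close> by simp
    qed simp
  qed
  then have "bounded {x. vext u x \<noteq> 0}" using bounded_cball bounded_subset by blast
  then show "compact (closure {x. vext u x \<noteq> 0})" by (simp add: compact_closure)
qed



lemma cov_real:
  fixes f :: "real^3 \<Rightarrow> real" and g :: "real^3 \<Rightarrow> real^3"
  assumes S: "S \<in> sets lebesgue" and der: "\<And>x. x\<in>S \<Longrightarrow> (g has_derivative g' x) (at x within S)"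
    and inj: "inj_on g S" and fi: "f absolutely_integrable_on (g ` S)"
  shows "(\<lambda>x. \<bar>det (matrix (g' x))\<bar> * f (g x)) absolutely_integrable_on S"
    "integral S (\<lambda>x. \<bar>det (matrix (g' x))\<bar> * f (g x)) = integral (g ` S) f"
proof -
  have "(\<lambda>x. \<bar>det (matrix (g' x))\<bar> *\<^sub>R vec (f (g x)) :: real^1) absolutely_integrable_on S \<and>
      integral S (\<lambda>x. \<bar>det (matrix (g' x))\<bar> *\<^sub>R vec (f (g x)) :: real^1) = vec (integral (g`S) f)
      \<longleftrightarrow> (\<lambda>x. vec (f x)::real^1) absolutely_integrable_on (g`S) \<and> integral (g`S) (\<lambda>x. vec (f x) :: real^1) = vec (integral (g`S) f)"
    by (rule has_absolute_integral_change_of_variables[OF S der inj])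
  then have "(\<lambda>x. \<bar>det (matrix (g' x))\<bar> *\<^sub>R vec (f (g x)) :: real^1) absolutely_integrable_on S \<and>
      integral S (\<lambda>x. \<bar>det (matrix (g' x))\<bar> *\<^sub>R vec (f (g x)) :: real^1) = vec (integral (g`S) f)"
    using fi by (simp add: absolutely_integrable_on_1_iff integral_on_1_eq)
  then show "(\<lambda>x. \<bar>det (matrix (g' x))\<bar> * f (g x)) absolutely_integrable_on S"
    "integral S (\<lambda>x. \<bar>det (matrix (g' x))\<bar> * f (g x)) = integral (g ` S) f"
    by (simp_all add: absolutely_integrable_on_1_iff integral_on_1_eq vec_eq_iff)
qed

lemma lint_conv:
  fixes f :: "real^3 \<Rightarrow> real"
  assumes S: "closed S" and c: "continuous_on S f" and z: "\<And>x. x\<in>S \<Longrightarrow> R < norm x \<Longrightarrow> f x = 0"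
  shows "f absolutely_integrable_on S" "(LINT x:S|lborel. f x) = integral S f"
proof -
  define K where "K = S \<inter> cball 0 R"
  have cK: "compact K" unfolding K_def using S by (intro closed_Int_compact) auto
  have ind: "(\<lambda>x. indicator S x *\<^sub>R f x) = (\<lambda>x. indicator K x *\<^sub>R f x)"
    using z by (force simp: indicator_def K_def)
  have int: "integrable lborel (\<lambda>x. indicator S x *\<^sub>R f x)"
    unfolding ind by (rule borel_integrable_compact[OF cK continuous_on_subset[OF c]]) (auto simp: K_def)
  have meas: "(\<lambda>x. indicator S x *\<^sub>R f x) \<in> borel_measurable lborel"
    using int by (rule borel_measurable_integrable)
  have si: "set_integrable lebesgue S f"
    unfolding set_integrable_def using int meas by (simp add: integrable_completion)
  then show "f absolutely_integrable_on S" .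
  have "(LINT x:S|lborel. f x) = (LINT x:S|lebesgue. f x)"
    unfolding set_lebesgue_integral_def using integral_completion[OF meas] by simp
  also have "\<dots> = integral S f" by (rule set_lebesgue_integral_eq_integral(2)[OF si])
  finally show "(LINT x:S|lborel. f x) = integral S f" .
qed

lemma open_leb: "open (S::(real^3) set) \<Longrightarrow> S \<in> sets lebesgue"
  by (simp add: borel_open sets_completionI_sets)

lemma s1_inj: "inj_on s1 (- {0})"
proof (rule inj_onI)
  fix x y assume x: "x \<in> - {0}" and y: "y \<in> - {0}" and e: "s1 x = s1 y"
  then have "norm x = norm y" using norm_s1[of x] norm_s1[of y] by simp
  then have "x \<bullet> x = y \<bullet> y" by (simp add: power2_norm_eq_inner[symmetric])
  then show "x = y" using e x y by (simp add: s1_def)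
qed
lemma s2_inj: "inj_on s2 (- {0})"
proof (rule inj_onI)
  fix x y assume x: "x \<in> - {0}" and y: "y \<in> - {0}" and e: "s2 x = s2 y"
  then have "1 / norm x ^ 2 = 1 / norm y ^ 2" using norm_s2[of x] norm_s2[of y] by simp
  then have "norm x = norm y" by (simp add: power2_eq_iff_nonneg)
  then show "x = y" using e x y by (simp add: s2_def)
qed

lemma pointwise_bound:
  assumes x0: "x \<noteq> 0" and x1: "norm x < 1"
  shows "norm (Wfun G x)^2 \<le> 18 * (\<bar>det (matrix (D1 x))\<bar> * norm (G (s1 x))^2) + 16 * (\<bar>det (matrix (D2 x))\<bar> * norm (G (s2 x))^2)"
proof -
  define r where "r = norm x"
  have r: "0 < r" "r < 1" using x0 x1 by (auto simp: r_def)
  define a where "a = norm (G (s1 x))"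
  define b where "b = norm (G (s2 x))"
  have xx: "x \<bullet> x = r^2" by (simp add: r_def power2_norm_eq_inner)
  have n1: "norm (D1 x (G (s1 x))) = a / r^2" using norm_D1[OF x0] by (simp add: a_def xx)
  have n2: "norm (D2 x (G (s2 x))) \<le> 2 * b / r^3" using norm_D2[OF x0] by (simp add: b_def r_def)
  have d1: "\<bar>det (matrix (D1 x))\<bar> = 1 / r^6" using det_D1[OF x0] by (simp add: xx power_mult[symmetric])
  have d2: "\<bar>det (matrix (D2 x))\<bar> = 2 / r^9" using det_D2[OF x0] by (simp add: r_def)
  have "norm (Wfun G x) \<le> 3 * norm (D1 x (G (s1 x))) + 2 * norm (D2 x (G (s2 x)))"
    unfolding Wfun_def using norm_triangle_ineq4[of "3 *\<^sub>R D1 x (G (s1 x))" "2 *\<^sub>R D2 x (G (s2 x))"] by simp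
  also have "\<dots> \<le> 3 * (a / r^2) + 2 * (2 * b / r^3)" using n1 n2 by simp
  finally have w: "norm (Wfun G x) \<le> 3 * (a / r^2) + 2 * (2 * b / r^3)" .
  have "norm (Wfun G x)^2 \<le> (3 * (a / r^2) + 2 * (2 * b / r^3))^2"
    using w by (intro power_mono) auto
  also have "\<dots> \<le> 18 * (a / r^2)^2 + 8 * (2 * b / r^3)^2"
  proof -
    have sq: "(P + Q)^2 \<le> 2*P^2 + 2*Q^2" for P Q :: real
      using zero_le_power2[of "P - Q"] by (simp add: power2_eq_square algebra_simps)
    have e: "2 * (3 * (a / r^2))^2 + 2 * (2 * (2 * b / r^3))^2 = 18 * (a / r^2)^2 + 8 * (2 * b / r^3)^2"
      by (simp add: power2_eq_square field_simps)
    show ?thesis using sq[of "3 * (a / r^2)" "2 * (2 * b / r^3)"] unfolding e .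
  qed
  also have "\<dots> = 18 * (a^2 / r^4) + 32 * (b^2 / r^6)" by (simp add: power_divide power_mult_distrib eval_nat_numeral)
  also have "\<dots> \<le> 18 * (1/r^6 * a^2) + 16 * (2/r^9 * b^2)"
  proof (intro add_mono mult_left_mono)
    have "r^6 \<le> r^4" using r by (intro power_decreasing) auto
    then have "1/r^4 \<le> 1/r^6" using r by (intro divide_left_mono) auto
    then have "a^2 * (1/r^4) \<le> a^2 * (1/r^6)" by (intro mult_left_mono) auto
    then show "a^2 / r^4 \<le> 1/r^6 * a^2" by (simp add: divide_inverse mult.commute)
    have "r^9 \<le> r^6" using r by (intro power_decreasing) auto
    then have "1/r^6 \<le> 1/r^9" using r by (intro divide_left_mono) auto
    then have "b^2 * (1/r^6) \<le> b^2 * (1/r^9)" by (intro mult_left_mono) auto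
    then show "32 * (b^2 / r^6) \<le> 16 * (2/r^9 * b^2)" by (simp add: divide_inverse algebra_simps)
  qed auto
  finally show ?thesis by (simp add: d1 d2 a_def b_def)
qed

lemma closed_leb: "closed (S::(real^3) set) \<Longrightarrow> S \<in> sets lebesgue"
  by (simp add: borel_closed sets_completionI_sets)

lemma ai_subset_int:
  fixes f :: "real^3 \<Rightarrow> real"
  assumes "f absolutely_integrable_on A" "B \<in> sets lebesgue" "B \<subseteq> A"
  shows "f integrable_on B" "f absolutely_integrable_on B"
  using set_integrable_subset[OF assms] absolutely_integrable_on_def by blast+

lemma grad_est:
  assumes u: "C1c_M u G" and R: "R \<ge> 1" "\<And>x. x\<in>extM \<Longrightarrow> R < norm x \<Longrightarrow> u x = 0"
    "\<And>x. x\<in>extM \<Longrightarrow> R < norm x \<Longrightarrow> G x = 0"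
  shows "integral extM (\<lambda>x. norm (G x)^2) \<le> integral UNIV (\<lambda>x. norm (Gext G x)^2)"
    "integral UNIV (\<lambda>x. norm (Gext G x)^2) \<le> 35 * integral extM (\<lambda>x. norm (G x)^2)"
    "(\<lambda>x. norm (G x)^2) absolutely_integrable_on extM"
    "(\<lambda>x. norm (Gext G x)^2) absolutely_integrable_on UNIV"
proof -
  define f2 where "f2 = (\<lambda>x. norm (G x)^2)"
  define g2 where "g2 = (\<lambda>x. norm (Gext G x)^2)"
  have C: "C1c_R3 (vext u) (Gext G)" by (rule ext_C1[OF u R])
  have cGe: "continuous_on UNIV (Gext G)" using C by (simp add: C1c_R3_def)
  have cG: "continuous_on extM G" using u by (simp add: C1c_M_def)
  have f2ai: "f2 absolutely_integrable_on extM"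
    unfolding f2_def by (rule lint_conv(1)[OF closed_extM, where R=R]) (auto intro!: continuous_intros cG simp: R(3))
  have g2ai: "g2 absolutely_integrable_on UNIV"
  proof (rule lint_conv(1)[OF closed_UNIV, where R=R])
    show "continuous_on UNIV g2" unfolding g2_def by (intro continuous_intros cGe)
    fix x :: "real^3" assume "R < norm x"
    moreover then have "x \<in> extM" using R(1) by (simp add: extM_iff)
    ultimately show "g2 x = 0" using R(3) by (simp add: g2_def Gext_def)
  qed
  then show "(\<lambda>x. norm (G x)^2) absolutely_integrable_on extM"
    "(\<lambda>x. norm (Gext G x)^2) absolutely_integrable_on UNIV"
    using f2ai unfolding f2_def g2_def by auto
  have g2U: "g2 integrable_on UNIV" using g2ai absolutely_integrable_on_def by blast
  have f2e: "f2 integrable_on extM" using f2ai absolutely_integrable_on_def by blast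
  have g2e: "g2 integrable_on extM" by (rule ai_subset_int(1)[OF g2ai closed_leb[OF closed_extM]]) simp
  have g2b: "g2 integrable_on ball 0 1" by (rule ai_subset_int(1)[OF g2ai open_leb]) auto
  define B where "B = ball (0::real^3) 1 - {0}"
  have oB: "open B" unfolding B_def by (intro open_Diff) auto
  have B0: "B \<subseteq> - {0}" by (auto simp: B_def)
  have g2B: "g2 integrable_on B" by (rule ai_subset_int(1)[OF g2ai open_leb[OF oB]]) auto
  have fe: "integral extM f2 = integral extM g2"
    by (rule integral_cong) (simp add: f2_def g2_def Gext_def)
  show "integral extM (\<lambda>x. norm (G x)^2) \<le> integral UNIV (\<lambda>x. norm (Gext G x)^2)"
    using fe integral_subset_le[OF _ g2e g2U] by (simp add: f2_def g2_def)
  have "(g2 has_integral (integral extM g2 + integral (ball 0 1) g2)) (extM \<union> ball 0 1)"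
    by (rule has_integral_Un[OF integrable_integral[OF g2e] integrable_integral[OF g2b]])
       (auto simp: extM_def intro: empty_imp_negligible)
  moreover have "extM \<union> ball 0 1 = UNIV" by (auto simp: extM_def)
  ultimately have split: "integral UNIV g2 = integral extM g2 + integral (ball 0 1) g2"
    by (metis integral_unique)
  have bB: "integral (ball 0 1) g2 = integral B g2"
    by (intro empty_imp_negligible integral_spike_set) (auto simp: B_def g2_def Gext_def extM_iff)
  have cv: "(\<lambda>x. \<bar>det (matrix (D x))\<bar> * f2 (s x)) absolutely_integrable_on B \<and>
       integral B (\<lambda>x. \<bar>det (matrix (D x))\<bar> * f2 (s x)) \<le> integral extM f2"
    if der: "\<And>x S. x \<noteq> 0 \<Longrightarrow> (s has_derivative D x) (at x within S)" and inj: "inj_on s (- {0})"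
      and sin: "\<And>x. 0 < norm x \<Longrightarrow> norm x \<le> 1 \<Longrightarrow> s x \<in> extM" for s D
  proof -
    have sB: "s ` B \<subseteq> extM" using sin by (force simp: B_def)
    have dif: "s differentiable_on B" using der B0 unfolding differentiable_on_def differentiable_def by blast
    have mB: "s ` B \<in> sets lebesgue" by (rule differentiable_image_in_sets_lebesgue[OF open_leb[OF oB] _ dif]) simp
    have fi: "f2 absolutely_integrable_on (s ` B)" by (rule ai_subset_int(2)[OF f2ai mB sB])
    have dB: "(s has_derivative D x) (at x within B)" if "x \<in> B" for x
    proof -
      have "x \<noteq> 0" using that B0 by auto
      then show ?thesis by (rule der)
    qed
    note c = cov_real[OF open_leb[OF oB] dB inj_on_subset[OF inj B0] fi]
    have "integral (s ` B) f2 \<le> integral extM f2"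
      by (rule integral_subset_le[OF sB ai_subset_int(1)[OF f2ai mB sB] f2e]) (simp add: f2_def)
    then show ?thesis using c by simp
  qed
  note cv1 = cv[of s1 D1, OF s1_deriv s1_inj s1_in]
  note cv2 = cv[of s2 D2, OF s2_deriv s2_inj s2_in]
  define H1 where "H1 = (\<lambda>x. \<bar>det (matrix (D1 x))\<bar> * f2 (s1 x))"
  define H2 where "H2 = (\<lambda>x. \<bar>det (matrix (D2 x))\<bar> * f2 (s2 x))"
  have H1i: "H1 integrable_on B" using cv1 absolutely_integrable_on_def unfolding H1_def by blast
  have H2i: "H2 integrable_on B" using cv2 absolutely_integrable_on_def unfolding H2_def by blast
  have H1i': "(\<lambda>x. 18 * H1 x) integrable_on B" using integrable_on_cmult_left[OF H1i, of 18] by simp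
  have H2i': "(\<lambda>x. 16 * H2 x) integrable_on B" using integrable_on_cmult_left[OF H2i, of 16] by simp
  have "integral B g2 \<le> integral B (\<lambda>x. 18 * H1 x + 16 * H2 x)"
  proof (rule integral_le[OF g2B integrable_add[OF H1i' H2i']])
    fix x assume x: "x \<in> B"
    then have x0: "x \<noteq> 0" and x1: "norm x < 1" and xe: "x \<notin> extM" by (auto simp: B_def extM_iff)
    show "g2 x \<le> 18 * H1 x + 16 * H2 x"
    proof -
      have "Gext G x = Wfun G x" unfolding Gext_def using xe x0 by (simp only: if_not_P if_False)
      then have e1: "g2 x = norm (Wfun G x)^2" unfolding g2_def by (rule arg_cong[where f="\<lambda>v. norm v ^ 2"])
      have e2: "18 * H1 x + 16 * H2 x = 18 * (\<bar>det (matrix (D1 x))\<bar> * norm (G (s1 x))^2) + 16 * (\<bar>det (matrix (D2 x))\<bar> * norm (G (s2 x))^2)"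
        by (simp only: H1_def H2_def f2_def)
      show ?thesis unfolding e1 e2 by (rule pointwise_bound[OF x0 x1])
    qed
  qed
  also have "\<dots> = integral B (\<lambda>x. 18 * H1 x) + integral B (\<lambda>x. 16 * H2 x)"
    by (rule integral_add[OF H1i' H2i'])
  also have "\<dots> = 18 * integral B H1 + 16 * integral B H2"
    using integral_mult[OF H1i, of 18] integral_mult[OF H2i, of 16] by (simp only:)
  also have "\<dots> \<le> 18 * integral extM f2 + 16 * integral extM f2"
    using cv1 cv2 unfolding H1_def H2_def by simp
  finally have "integral B g2 \<le> 34 * integral extM f2" by simp
  then show "integral UNIV (\<lambda>x. norm (Gext G x)^2) \<le> 35 * integral extM (\<lambda>x. norm (G x)^2)"
    using split bB fe unfolding f2_def g2_def by simp
qed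
lemma powr6: "(\<lambda>x. \<bar>f x\<bar> powr 6) = (\<lambda>x. \<bar>f x :: real\<bar> ^ 6)"
  by (simp add: powr_numeral)
lemma powr2: "(\<lambda>x. \<bar>norm (f x)\<bar> powr 2) = (\<lambda>x. norm (f x :: real^3) ^ 2)"
  by (simp add: powr_numeral)

theorem theorem5p3:
  fixes A :: real
  assumes sob: "\<And>v G. C1c_R3 v G \<Longrightarrow>
      Lp_norm_on 6 UNIV v \<le> A * Lp_norm_on 2 UNIV (\<lambda>x. norm (G x))"
    and u: "C1c_M u G"
  shows "Lp_norm_on 6 extM u \<le> 2 * (2 + sqrt 2) * A * Lp_norm_on 2 extM (\<lambda>x. norm (G x))"
proof -
  obtain R where R: "R \<ge> 1" "\<And>x. x\<in>extM \<Longrightarrow> R < norm x \<Longrightarrow> u x = 0"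
    "\<And>x. x\<in>extM \<Longrightarrow> R < norm x \<Longrightarrow> G x = 0"
    using supp_R[OF u] by blast
  have C: "C1c_R3 (vext u) (Gext G)" by (rule ext_C1[OF u R])
  note ge = grad_est[OF u R]
  have cu: "continuous_on extM u" using u by (simp add: C1c_M_def)
  have cv: "continuous_on UNIV (vext u)"
  proof -
    have "isCont (vext u) x" for x
      using C unfolding C1c_R3_def gderiv_def by (meson has_derivative_continuous)
    then show ?thesis by (simp add: continuous_at_imp_continuous_on)
  qed
  define IU where "IU = integral extM (\<lambda>x. \<bar>u x\<bar> ^ 6)"
  define IV where "IV = integral UNIV (\<lambda>x. \<bar>vext u x\<bar> ^ 6)"
  define X where "X = integral extM (\<lambda>x. norm (G x) ^ 2)"
  define Y where "Y = integral UNIV (\<lambda>x. norm (Gext G x) ^ 2)"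
  have lu: "(\<lambda>x. \<bar>u x\<bar> ^ 6) absolutely_integrable_on extM"
     "(LINT x:extM|lborel. \<bar>u x\<bar> ^ 6) = IU"
    unfolding IU_def by (rule lint_conv[OF closed_extM, where R=R], (auto intro!: continuous_intros cu simp: R(2)))+
  have lv: "(\<lambda>x. \<bar>vext u x\<bar> ^ 6) absolutely_integrable_on UNIV"
     "(LINT x:UNIV|lborel. \<bar>vext u x\<bar> ^ 6) = IV"
  proof -
    have vz: "\<bar>vext u x\<bar> ^ 6 = 0" if "x \<in> UNIV" "R < norm x" for x
    proof -
      have "x \<in> extM" using that R(1) by (simp add: extM_iff)
      then show ?thesis using R(2)[of x] that by (simp add: vext_def)
    qed
    have cc: "continuous_on UNIV (\<lambda>x. \<bar>vext u x\<bar> ^ 6)" by (intro continuous_intros cv)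
    show "(\<lambda>x. \<bar>vext u x\<bar> ^ 6) absolutely_integrable_on UNIV"
      "(LINT x:UNIV|lborel. \<bar>vext u x\<bar> ^ 6) = IV"
      unfolding IV_def using lint_conv[OF closed_UNIV cc vz] by auto
  qed
  have lG: "(LINT x:extM|lborel. norm (G x) ^ 2) = X"
    unfolding X_def using R(1) by (intro lint_conv(2)[OF closed_extM, where R=R]) (auto intro!: continuous_intros simp: R(3) u[unfolded C1c_M_def])
  have cGe: "continuous_on UNIV (Gext G)" using C by (simp add: C1c_R3_def)
  have lGe: "(LINT x:UNIV|lborel. norm (Gext G x) ^ 2) = Y"
  proof -
    have gz: "norm (Gext G x) ^ 2 = 0" if "x \<in> UNIV" "R < norm x" for x
    proof -
      have "x \<in> extM" using that R(1) by (simp add: extM_iff)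
      then show ?thesis using R(3)[of x] that by (simp add: Gext_def)
    qed
    have cc: "continuous_on UNIV (\<lambda>x. norm (Gext G x) ^ 2)" by (intro continuous_intros cGe)
    show ?thesis unfolding Y_def using lint_conv(2)[OF closed_UNIV cc gz] by auto
  qed
  have n1: "Lp_norm_on 6 extM u = IU powr (1/6)" unfolding Lp_norm_on_def powr6 lu(2) ..
  have n2: "Lp_norm_on 6 UNIV (vext u) = IV powr (1/6)" unfolding Lp_norm_on_def powr6 lv(2) ..
  have n3: "Lp_norm_on 2 extM (\<lambda>x. norm (G x)) = X powr (1/2)" unfolding Lp_norm_on_def powr2 lG ..
  have n4: "Lp_norm_on 2 UNIV (\<lambda>x. norm (Gext G x)) = Y powr (1/2)" unfolding Lp_norm_on_def powr2 lGe ..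
  have XY: "X \<le> Y" and Y35: "Y \<le> 35 * X" using ge(1,2) by (simp_all add: X_def Y_def)
  have X0: "0 \<le> X" unfolding X_def
    by (rule integral_nonneg) (use ge(3) absolutely_integrable_on_def in auto)
  have IU0: "0 \<le> IU" unfolding IU_def
    by (rule integral_nonneg) (use lu(1) absolutely_integrable_on_def in auto)
  have IUV: "IU \<le> IV"
  proof -
    have "IU = integral extM (\<lambda>x. \<bar>vext u x\<bar> ^ 6)" unfolding IU_def
      by (rule integral_cong) (simp add: vext_def)
    also have "\<dots> \<le> IV" unfolding IV_def
      by (rule integral_subset_le[OF _ ai_subset_int(1)[OF lv(1) closed_leb[OF closed_extM]]])
         (use lv(1) absolutely_integrable_on_def in auto)
    finally show ?thesis .
  qed
  have s: "IV powr (1/6) \<le> A * Y powr (1/2)" using sob[OF C] n2 n4 by simp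
  have a: "IU powr (1/6) \<le> IV powr (1/6)" using IU0 IUV by (intro powr_mono2) auto
  have Y0: "0 \<le> Y" using X0 XY by simp
  show ?thesis
  proof (cases "A \<ge> 0")
    case True
    have "Y powr (1/2) = sqrt Y" using Y0 by (simp add: powr_half_sqrt)
    also have "\<dots> \<le> sqrt (35 * X)" using Y35 by simp
    also have "\<dots> = sqrt 35 * sqrt X" by (simp add: real_sqrt_mult)
    also have "\<dots> \<le> 2 * (2 + sqrt 2) * sqrt X"
    proof (rule mult_right_mono)
      have "sqrt 35 \<le> sqrt 36" by (rule real_sqrt_le_mono) simp
      also have "\<dots> = 6" by (rule real_sqrt_unique) auto
      also have "\<dots> \<le> 2 * (2 + sqrt 2)" using real_sqrt_ge_one[of 2] by simp
      finally show "sqrt 35 \<le> 2 * (2 + sqrt 2)" .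
    qed (simp add: X0)
    also have "\<dots> = 2 * (2 + sqrt 2) * X powr (1/2)" using X0 by (simp add: powr_half_sqrt)
    finally have "A * Y powr (1/2) \<le> A * (2 * (2 + sqrt 2) * X powr (1/2))"
      using True by (intro mult_left_mono) auto
    then show ?thesis using a s n1 n3 by (simp add: mult.assoc mult.left_commute)
  next
    case False
    have p1: "0 \<le> IV powr (1/6)" by simp
    have p2: "0 \<le> Y powr (1/2)" by simp
    have "A * Y powr (1/2) \<le> 0" using False p2 by (simp add: mult_nonpos_nonneg)
    then have "A * Y powr (1/2) = 0" using s p1 by linarith
    then have "Y powr (1/2) = 0" using False by simp
    then have "Y = 0" by simp
    then have "X = 0" using X0 XY by simp
    then show ?thesis using a s n1 n3 \<open>A * Y powr (1/2) = 0\<close> by simp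
  qed
qed


end
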